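(* Let $\alpha=(\alpha_n)_{n\in\mathbb{Z}}\in(k^\times)^{\mathbb{Z}}$, $\beta=(\beta_n)_{n\in\mathbb{Z}}\in k^{\mathbb{Z}}$, $r\in\mathbb{Z}$ and $s>1$. Then $$(\phi_\alpha\theta_r)\,\phi^{(s)}_\beta\,(\phi_\alpha\theta_r)^{-1}=\phi^{(s)}_{\alpha^{-1}\alpha^{-1}[1]\cdots\alpha^{-1}[s-1]\,\beta[-r]}.$$ In particular, $\phi_\alpha\phi^{(s)}_\beta\phi_\alpha^{-1}=\phi^{(s)}_{\alpha^{-1}\alpha^{-1}[1]\cdots\alpha^{-1}[s-1]\,\beta}$.
   Context: Let $k$ be a field and $0\neq q\in k$ not a root of unity. $H=k_q[x,x^{-1},y]$ is the $k$-algebra generated by $x,x^{-1},y$ with $xx^{-1}=x^{-1}x=1$, $yx=qxy$; $\{x^ny^m:n\in\mathbb{Z},m\in\mathbb{N}\}$ is a $k$-basis. For sequences in $k^{\mathbb{Z}}$ operations are componentwise; $\alpha^{-1}=(\alpha_n^{-1})_n$ and $\gamma[r]$ denotes the sequence with $\gamma[r]_n=\gamma_{n+r}$. $\theta_r$ is the linear map $x^ny^m\mapsto x^{n+r}y^m$; $\phi_\alpha$ is the linear map with $\phi_\alpha(x^n)=x^n$, $\phi_\alpha(x^ny^m)=(\prod_{i=0}^{m-1}\alpha_{n+i})x^ny^m$ for $m\ge1$. Let $(j)_q=1+q+\dots+q^{j-1}$, $(j)!_q=(j)_q\cdots(1)_q$, $\binom{m}{i}_q=\frac{(m)!_q}{(i)!_q(m-i)!_q}$,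 $\binom{m}{s}_{q,i}=\prod_{j=0}^{i-1}\binom{m-js}{s}_q$, and for $\beta\in k^{\mathbb{Z}}$, $\beta_{n,s;0}=1$, $\beta_{n,s;i}=\prod_{j=0}^{i-1}\beta_{n+js}$. For $s\ge2$, $\phi^{(s)}_\beta$ is the linear map $H\to H$ with $\phi^{(s)}_\beta(x^ny^m)=x^ny^m$ for $0\le m<s$ and, for $m\geq s$, $\phi^{(s)}_\beta(x^ny^m)=x^ny^m+\sum_{1\le i\le\lfloor m/s\rfloor}\binom{m}{s}_{q,i}\big(\beta_{n,s;i}x^{n+is}-\beta_{n,s;i-1}\beta_{n+m-s}x^{n+is-s}\big)y^{m-is}$. *)

theory Defs
  imports Main "HOL-Library.Poly_Mapping"
begin

text \<open>Elements of H = k_q[x,x^-1,y] are represented by their coefficient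
 vectors w.r.t. the basis x^n y^m, i.e. finitely supported maps (n,m) => coefficient.\<close>

type_synonym 'a qtorus = "(int \<times> nat) \<Rightarrow>\<^sub>0 'a"

definition xy :: "int \<Rightarrow> nat \<Rightarrow> 'a::field qtorus" where
  "xy n m = Poly_Mapping.single (n, m) 1"

definition scal :: "'a::field \<Rightarrow> 'a qtorus \<Rightarrow> 'a qtorus" where
  "scal c f = Poly_Mapping.map (\<lambda>d. c * d) f"

definition lin_ext :: "(int \<Rightarrow> nat \<Rightarrow> 'a::field qtorus) \<Rightarrow> 'a qtorus \<Rightarrow> 'a qtorus" where
  "lin_ext b f = (\<Sum>k\<in>Poly_Mapping.keys f. scal (Poly_Mapping.lookup f k) (b (fst k) (snd k)))"

definition qint :: "'a::field \<Rightarrow> nat \<Rightarrow> 'a" where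
  "qint q j = (\<Sum>i<j. q ^ i)"

definition qfact :: "'a::field \<Rightarrow> nat \<Rightarrow> 'a" where
  "qfact q m = (\<Prod>j\<in>{1..m}. qint q j)"

definition qbinom :: "'a::field \<Rightarrow> nat \<Rightarrow> nat \<Rightarrow> 'a" where
  "qbinom q m i = qfact q m / (qfact q i * qfact q (m - i))"

definition qbinom_i :: "'a::field \<Rightarrow> nat \<Rightarrow> nat \<Rightarrow> nat \<Rightarrow> 'a" where
  "qbinom_i q m s i = (\<Prod>j<i. qbinom q (m - j * s) s)"

definition bprod :: "(int \<Rightarrow> 'a::field) \<Rightarrow> int \<Rightarrow> nat \<Rightarrow> nat \<Rightarrow> 'a" where
  "bprod \<beta> n s i = (\<Prod>j<i. \<beta> (n + int j * int s))"

definition theta :: "int \<Rightarrow> 'a::field qtorus \<Rightarrow> 'a qtorus" where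
  "theta r = lin_ext (\<lambda>n m. xy (n + r) m)"

definition phi :: "(int \<Rightarrow> 'a::field) \<Rightarrow> 'a qtorus \<Rightarrow> 'a qtorus" where
  "phi \<alpha> = lin_ext (\<lambda>n m. scal (\<Prod>i<m. \<alpha> (n + int i)) (xy n m))"

definition phi_s :: "'a::field \<Rightarrow> nat \<Rightarrow> (int \<Rightarrow> 'a) \<Rightarrow> 'a qtorus \<Rightarrow> 'a qtorus" where
  "phi_s q s \<beta> = lin_ext (\<lambda>n m.
     if m < s then xy n m
     else xy n m + (\<Sum>i\<in>{1..m div s}. scal (qbinom_i q m s i)
        (scal (bprod \<beta> n s i) (xy (n + int i * int s) (m - i * s))
         - scal (bprod \<beta> n s (i - 1) * \<beta> (n + int m - int s))
                (xy (n + int i * int s - int s) (m - i * s)))))"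

end

theory Submission imports Defs begin

lemma lookup_scal[simp]: "Poly_Mapping.lookup (scal c f) k = c * Poly_Mapping.lookup f k"
  unfolding scal_def by (simp add: Poly_Mapping.map.rep_eq when_def)

lemma scal_add: "scal c (f + g) = scal c f + scal c g"
  by (rule poly_mapping_eqI) (simp add: lookup_add algebra_simps)
lemma scal_diff: "scal c (f - g) = scal c f - scal c g"
  by (rule poly_mapping_eqI) (simp add: lookup_minus algebra_simps)
lemma scal_add_left: "scal (a + b) f = scal a f + scal b f"
  by (rule poly_mapping_eqI) (simp add: lookup_add algebra_simps)
lemma scal_scal[simp]: "scal a (scal b f) = scal (a * b) f"
  by (rule poly_mapping_eqI) simp
lemma scal_one[simp]: "scal 1 f = f"
  by (rule poly_mapping_eqI) simp
lemma scal_zero_left[simp]: "scal 0 f = 0"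
  by (rule poly_mapping_eqI) simp
lemma scal_zero[simp]: "scal c 0 = 0"
  by (rule poly_mapping_eqI) simp
lemma scal_sum: "scal c (sum g S) = (\<Sum>x\<in>S. scal c (g x))"
  by (rule poly_mapping_eqI) (simp add: lookup_sum sum_distrib_left)
lemma keys_scal: "Poly_Mapping.keys (scal c f) \<subseteq> Poly_Mapping.keys f"
  by (auto simp: in_keys_iff)

lemma lin_ext_superset:
  assumes "finite S" "Poly_Mapping.keys f \<subseteq> S"
  shows "lin_ext b f = (\<Sum>k\<in>S. scal (Poly_Mapping.lookup f k) (b (fst k) (snd k)))"
  unfolding lin_ext_def
  by (rule sum.mono_neutral_left) (use assms in \<open>auto simp: in_keys_iff\<close>)

lemma lin_ext_add: "lin_ext b (f + g) = lin_ext b f + lin_ext b g"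
proof -
  let ?S = "Poly_Mapping.keys f \<union> Poly_Mapping.keys g"
  have "lin_ext b (f + g) = (\<Sum>k\<in>?S. scal (Poly_Mapping.lookup (f+g) k) (b (fst k) (snd k)))"
    by (rule lin_ext_superset) (auto dest: set_mp[OF keys_add])
  also have "\<dots> = (\<Sum>k\<in>?S. scal (Poly_Mapping.lookup f k) (b (fst k) (snd k))) + (\<Sum>k\<in>?S. scal (Poly_Mapping.lookup g k) (b (fst k) (snd k)))"
    by (simp add: lookup_add scal_add_left sum.distrib)
  also have "\<dots> = lin_ext b f + lin_ext b g"
    by (simp add: lin_ext_superset[symmetric])
  finally show ?thesis .
qed

lemma lin_ext_zero[simp]: "lin_ext b 0 = 0"
  by (simp add: lin_ext_def)

lemma lin_ext_scal: "lin_ext b (scal c f) = scal c (lin_ext b f)"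
proof -
  have "lin_ext b (scal c f) = (\<Sum>k\<in>Poly_Mapping.keys f. scal (Poly_Mapping.lookup (scal c f) k) (b (fst k) (snd k)))"
    by (rule lin_ext_superset) (auto simp: keys_scal)
  then show ?thesis by (simp add: lin_ext_def scal_sum)
qed

lemma lin_ext_diff: "lin_ext b (f - g) = lin_ext b f - lin_ext b g"
  using lin_ext_add[of b "f - g" g] by (simp add: algebra_simps)

lemma lin_ext_sum: "lin_ext b (sum g S) = (\<Sum>x\<in>S. lin_ext b (g x))"
  by (induction S rule: infinite_finite_induct) (auto simp: lin_ext_add)

lemma lin_ext_xy[simp]: "lin_ext b (xy n m) = b n m"
  by (simp add: lin_ext_def xy_def)

lemma lin_ext_comp: "lin_ext c (lin_ext b f) = lin_ext (\<lambda>n m. lin_ext c (b n m)) f"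
  by (subst (1) lin_ext_def) (simp add: lin_ext_sum lin_ext_scal lin_ext_def[of _ f])

lemma lin_ext_comp_fun: "lin_ext c \<circ> lin_ext b = lin_ext (\<lambda>n m. lin_ext c (b n m))"
  by (simp add: fun_eq_iff lin_ext_comp)

lemma lin_ext_id: "lin_ext xy f = f"
proof (rule poly_mapping_eqI)
  fix j
  have "Poly_Mapping.lookup (lin_ext xy f) j = (\<Sum>k\<in>Poly_Mapping.keys f. Poly_Mapping.lookup f k * (if k = j then 1 else 0))"
    by (simp add: lin_ext_def lookup_sum xy_def lookup_single when_def)
  also have "\<dots> = Poly_Mapping.lookup f j"
    by (simp add: if_distrib sum.delta in_keys_iff cong: if_cong)
  finally show "Poly_Mapping.lookup (lin_ext xy f) j = Poly_Mapping.lookup f j" .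
qed

lemma lin_ext_id_fun: "lin_ext (\<lambda>n m. xy n m) = id"
  using lin_ext_id by (auto simp: fun_eq_iff)


lemma prod_inv': "(\<Prod>x\<in>A. inverse (f x)) = inverse (\<Prod>x\<in>A. f x :: 'a::field)"
  using prod_inversef[of f A] by (simp add: comp_def)

lemma h1: "(y::'a::field) \<noteq> 0 \<Longrightarrow> inverse (x * y) * (b * y) = inverse x * b"
  by (simp add: inverse_mult_distrib)
lemma h2: "(y::'a::field) \<noteq> 0 \<Longrightarrow> inverse (x * y * z) * (b1 * b2 * y) = (inverse x * b1) * (inverse z * b2)"
  by (simp add: inverse_mult_distrib mult_ac)

lemma h3:
  assumes "c * (b1 * A1) = b1'" "c * (b2 * A2) = b2'"
  shows "scal (c * B) (scal (b1 * A1) X1 - scal (b2 * A2) X2) = scal B (scal b1' X1 - scal b2' X2)"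
  by (rule poly_mapping_eqI) (simp add: lookup_minus algebra_simps flip: assms)

lemma idx1: "(a::int) - r + b + r = a + b" by simp
lemma idx2: "(a::int) - r + b - c + r = a + b - c" by simp

definition Aprod :: "(int \<Rightarrow> 'a::field) \<Rightarrow> int \<Rightarrow> nat \<Rightarrow> 'a" where
  "Aprod \<alpha> n m = (\<Prod>i<m. \<alpha> (n + int i))"

lemma Aprod_nz: "(\<And>n. \<alpha> n \<noteq> 0) \<Longrightarrow> Aprod \<alpha> n m \<noteq> 0"
  by (simp add: Aprod_def)

lemma Aprod_split: "Aprod \<alpha> n (a + b) = Aprod \<alpha> n a * Aprod \<alpha> (n + int a) b"
  by (induction b) (simp_all add: Aprod_def algebra_simps)

lemma Aprod_mult: "Aprod \<alpha> n (i * s) = (\<Prod>j<i. Aprod \<alpha> (n + int j * int s) s)"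
proof (induction i)
  case (Suc i)
  have "Aprod \<alpha> n (Suc i * s) = Aprod \<alpha> n (i * s + s)" by (simp add: add.commute)
  also have "\<dots> = Aprod \<alpha> n (i * s) * Aprod \<alpha> (n + int i * int s) s"
    by (simp add: Aprod_split)
  finally show ?case using Suc by simp
qed (simp add: Aprod_def)

lemma bprod_shift:
  fixes \<alpha> \<beta> :: "int \<Rightarrow> 'a::field" and r :: int and s :: nat
  defines "\<beta>' \<equiv> (\<lambda>n. (\<Prod>j<s. inverse (\<alpha> (n + int j))) * \<beta> (n - r))"
  shows "bprod \<beta>' n s i = inverse (Aprod \<alpha> n (i * s)) * bprod \<beta> (n - r) s i"
proof -
  have "bprod \<beta>' n s i = (\<Prod>j<i. inverse (Aprod \<alpha> (n + int j * int s) s) * \<beta> (n - r + int j * int s))"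
    unfolding bprod_def \<beta>'_def Aprod_def by (simp add: prod_inv' algebra_simps)
  also have "\<dots> = inverse (Aprod \<alpha> n (i * s)) * bprod \<beta> (n - r) s i"
    by (simp add: prod.distrib Aprod_mult bprod_def prod_inv')
  finally show ?thesis .
qed

lemma phi_theta: "phi \<alpha> \<circ> theta r = lin_ext (\<lambda>n m. scal (Aprod \<alpha> (n + r) m) (xy (n + r) m))"
  by (simp add: phi_def theta_def lin_ext_comp_fun Aprod_def)


definition Psi :: "(int \<Rightarrow> 'a::field) \<Rightarrow> int \<Rightarrow> 'a qtorus \<Rightarrow> 'a qtorus" where
  "Psi \<alpha> r = lin_ext (\<lambda>n m. scal (inverse (Aprod \<alpha> n m)) (xy (n - r) m))"

lemma inv_phi_theta:
  assumes "\<And>n. \<alpha> n \<noteq> 0"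
  shows "inv (phi \<alpha> \<circ> theta r) = Psi \<alpha> r"
proof (rule inv_unique_comp)
  show "(phi \<alpha> \<circ> theta r) \<circ> Psi \<alpha> r = id"
    unfolding phi_theta Psi_def lin_ext_comp_fun
    by (simp add: lin_ext_scal Aprod_nz[OF assms] lin_ext_id_fun)
  show "Psi \<alpha> r \<circ> (phi \<alpha> \<circ> theta r) = id"
    unfolding phi_theta Psi_def lin_ext_comp_fun
    by (simp add: lin_ext_scal Aprod_nz[OF assms] lin_ext_id_fun)
qed

lemma key:
  fixes \<alpha> \<beta> :: "int \<Rightarrow> 'a::field" and r :: int and s :: nat
  assumes anz: "\<And>n. \<alpha> n \<noteq> 0"
  defines "\<beta>' \<equiv> (\<lambda>n. (\<Prod>j<s. inverse (\<alpha> (n + int j))) * \<beta> (n - r))"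
  shows "(phi \<alpha> \<circ> theta r) (phi_s q s \<beta> (scal (inverse (Aprod \<alpha> n m)) (xy (n - r) m)))
     = phi_s q s \<beta>' (xy n m)"
proof (cases "m < s")
  case True
  then show ?thesis
    by (simp add: phi_theta phi_s_def lin_ext_scal Aprod_nz[OF anz])
next
  case False
  let ?c = "inverse (Aprod \<alpha> n m)"
  have 1: "?c * Aprod \<alpha> n m = 1" by (simp add: Aprod_nz[OF anz])
  have eqs: "?c * (bprod \<beta> (n - r) s i * Aprod \<alpha> (n + int i * int s) (m - i * s)) = bprod \<beta>' n s i"
     "?c * (bprod \<beta> (n - r) s (i - 1) * \<beta> (n - r + int m - int s) * Aprod \<alpha> (n + int i * int s - int s) (m - i * s))
       = bprod \<beta>' n s (i - 1) * \<beta>' (n + int m - int s)"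
    if "i \<in> {1..m div s}" for i
  proof -
    from that have ism: "i * s \<le> m" proof -
      have "i * s \<le> m div s * s" using that by simp
      also have "\<dots> \<le> m" by simp
      finally show ?thesis .
    qed
    have sp1: "Aprod \<alpha> n m = Aprod \<alpha> n (i * s) * Aprod \<alpha> (n + int i * int s) (m - i * s)"
      using Aprod_split[of \<alpha> n "i * s" "m - i * s"] ism by simp
    show "?c * (bprod \<beta> (n - r) s i * Aprod \<alpha> (n + int i * int s) (m - i * s)) = bprod \<beta>' n s i"
      unfolding sp1 bprod_shift[where \<alpha>=\<alpha> and \<beta>=\<beta> and r=r and s=s, folded \<beta>'_def]
      by (rule h1[OF Aprod_nz[OF anz]])
    show "?c * (bprod \<beta> (n - r) s (i - 1) * \<beta> (n - r + int m - int s) * Aprod \<alpha> (n + int i * int s - int s) (m - i * s))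
       = bprod \<beta>' n s (i - 1) * \<beta>' (n + int m - int s)"
    proof -
      have i1: "i \<ge> 1" using that by simp
      have eqm: "m = ((i - 1) * s + (m - i * s)) + s" using ism i1
        by (cases i) (auto simp: algebra_simps)
      have ix1: "n + int ((i - 1) * s) = n + int i * int s - int s" using i1
        by (simp add: of_nat_diff algebra_simps)
      have ix2: "n + int ((i - 1) * s) + int (m - i * s) = n + int m - int s"
        using ism i1 by (simp add: of_nat_diff algebra_simps)
      have sp2: "Aprod \<alpha> n m = Aprod \<alpha> n ((i - 1) * s) * Aprod \<alpha> (n + int i * int s - int s) (m - i * s)
           * Aprod \<alpha> (n + int m - int s) s"
      proof -
        have "Aprod \<alpha> n m = Aprod \<alpha> n ((i - 1) * s) * Aprod \<alpha> (n + int ((i - 1) * s)) (m - i * s)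
           * Aprod \<alpha> (n + int ((i - 1) * s) + int (m - i * s)) s"
          by (subst eqm, simp only: Aprod_split mult.assoc of_nat_add add.assoc)
        then show ?thesis unfolding ix2 unfolding ix1 .
      qed
      have b1: "\<beta>' (n + int m - int s) = inverse (Aprod \<alpha> (n + int m - int s) s) * \<beta> (n - r + int m - int s)"
        unfolding \<beta>'_def Aprod_def by (simp add: prod_inv' algebra_simps)
      show ?thesis
        unfolding sp2 b1 bprod_shift[where \<alpha>=\<alpha> and \<beta>=\<beta> and r=r and s=s, folded \<beta>'_def]
        by (rule h2[OF Aprod_nz[OF anz]])
    qed
  qed
  have LHS: "(phi \<alpha> \<circ> theta r) (phi_s q s \<beta> (scal ?c (xy (n - r) m)))
    = scal ?c (scal (Aprod \<alpha> n m) (xy n m)) + (\<Sum>i\<in>{1..m div s}. scal ?c (scal (qbinom_i q m s i)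
        (scal (bprod \<beta> (n - r) s i) (scal (Aprod \<alpha> (n + int i * int s) (m - i * s)) (xy (n + int i * int s) (m - i * s)))
         - scal (bprod \<beta> (n - r) s (i - 1) * \<beta> (n - r + int m - int s))
             (scal (Aprod \<alpha> (n + int i * int s - int s) (m - i * s)) (xy (n + int i * int s - int s) (m - i * s))))))"
    using False
    by (simp add: phi_theta phi_s_def lin_ext_scal lin_ext_add lin_ext_sum lin_ext_diff idx1 idx2
        scal_add scal_sum)
  show ?thesis
    unfolding LHS
    using False
    apply (simp add: phi_s_def 1)
    apply (rule sum.cong[OF refl])
    apply (rule h3)
    using eqs by auto
qed

lemma comp_lin: "\<exists>c. L = lin_ext c \<Longrightarrow> L \<circ> lin_ext b = lin_ext (\<lambda>n m. L (b n m))"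
  by (auto simp add: lin_ext_comp_fun)
lemma self_lin: "\<exists>c. L = lin_ext c \<Longrightarrow> L = lin_ext (\<lambda>n m. L (xy n m))"
  by auto

lemma gen:
  fixes \<alpha> \<beta> :: "int \<Rightarrow> 'a::field" and r :: int and s :: nat
  assumes anz: "\<And>n. \<alpha> n \<noteq> 0"
  shows "(phi \<alpha> \<circ> theta r) \<circ> phi_s q s \<beta> \<circ> inv (phi \<alpha> \<circ> theta r)
           = phi_s q s (\<lambda>n. (\<Prod>j<s. inverse (\<alpha> (n + int j))) * \<beta> (n - r))"
proof -
  have ps: "\<exists>c. phi_s q s \<gamma> = lin_ext c" for \<gamma> :: "int \<Rightarrow> 'a"
    by (auto simp: phi_s_def)
  have pt: "\<exists>c. phi \<alpha> \<circ> theta r = lin_ext c"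
    using phi_theta by blast
  have "(phi \<alpha> \<circ> theta r) \<circ> phi_s q s \<beta> \<circ> inv (phi \<alpha> \<circ> theta r)
      = (phi \<alpha> \<circ> theta r) \<circ> (phi_s q s \<beta> \<circ> Psi \<alpha> r)"
    by (simp add: inv_phi_theta[OF anz] comp_assoc)
  also have "\<dots> = lin_ext (\<lambda>n m. (phi \<alpha> \<circ> theta r) (phi_s q s \<beta> (scal (inverse (Aprod \<alpha> n m)) (xy (n - r) m))))"
    unfolding Psi_def comp_lin[OF ps] comp_lin[OF pt] by simp
  also have "\<dots> = lin_ext (\<lambda>n m. phi_s q s (\<lambda>n. (\<Prod>j<s. inverse (\<alpha> (n + int j))) * \<beta> (n - r)) (xy n m))"
    by (simp add: key[OF anz, unfolded comp_apply])
  also have "\<dots> = phi_s q s (\<lambda>n. (\<Prod>j<s. inverse (\<alpha> (n + int j))) * \<beta> (n - r))"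
    by (rule self_lin[OF ps, symmetric])
  finally show ?thesis .
qed

theorem lemma3p16:
  fixes q :: "'a::field" and \<alpha> \<beta> :: "int \<Rightarrow> 'a" and r :: int and s :: nat
  assumes q_nz: "q \<noteq> 0"
    and q_not_root: "\<And>n::nat. n > 0 \<Longrightarrow> q ^ n \<noteq> 1"
    and \<alpha>_units: "\<And>n. \<alpha> n \<noteq> 0"
    and s_gt: "s > 1"
  shows "(phi \<alpha> \<circ> theta r) \<circ> phi_s q s \<beta> \<circ> inv (phi \<alpha> \<circ> theta r)
           = phi_s q s (\<lambda>n. (\<Prod>j<s. inverse (\<alpha> (n + int j))) * \<beta> (n - r))
       \<and> phi \<alpha> \<circ> phi_s q s \<beta> \<circ> inv (phi \<alpha>)
           = phi_s q s (\<lambda>n. (\<Prod>j<s. inverse (\<alpha> (n + int j))) * \<beta> n)"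
proof
  show "(phi \<alpha> \<circ> theta r) \<circ> phi_s q s \<beta> \<circ> inv (phi \<alpha> \<circ> theta r)
           = phi_s q s (\<lambda>n. (\<Prod>j<s. inverse (\<alpha> (n + int j))) * \<beta> (n - r))"
    by (rule gen[OF \<alpha>_units])
  have t0: "theta 0 = (id :: 'a qtorus \<Rightarrow> _)"
    by (simp add: theta_def lin_ext_id_fun)
  show "phi \<alpha> \<circ> phi_s q s \<beta> \<circ> inv (phi \<alpha>)
           = phi_s q s (\<lambda>n. (\<Prod>j<s. inverse (\<alpha> (n + int j))) * \<beta> n)"
    using gen[OF \<alpha>_units, where q=q and s=s and \<beta>=\<beta> and r=0] by (simp add: t0)
qed

end
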